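(* Consider the one-step-ahead prediction problem described in the context, with nonrandomized decisions $\delta=(\delta_0,\delta_1)\in\mathcal D=[0,1]^2$ and the Kullback–Leibler risk $R_\delta(\theta)$. Let $\mathcal C_{<}=\{(\delta_0,\delta_1):0<\delta_0<\delta_1<1\}$, $\mathcal C_{=}=\{(\delta_0,\delta_1):0<\delta_0=\delta_1<1\}$, $\mathcal M=\{(0,1)\}$. Then the class $\mathcal A=\mathcal C_{<}\cup\mathcal C_{=}\cup\mathcal M$ is the minimal complete class within $\mathcal D$. In particular, $\mathcal A$ is exactly the set of admissible decisions in $\mathcal D$.
   Context: Bernoulli model: for $\theta\in[0,1]$, $p_\theta(x)=\theta^x(1-\theta)^{1-x}$, $x\in\{0,1\}$. One observes $x\sim p_\theta$ and predicts an independent future $y\sim p_\theta$. A nonrandomized decision is a pair $\delta=(\delta_0,\delta_1)\in\mathcal D=[0,1]^2$, used as the predictive distribution $p_\delta(y\mid x)=\delta_x^{\,y}(1-\delta_x)^{1-y}$. The loss is the Kullback–Leibler divergence $L(\theta,\delta_x)=\theta\log\frac{\theta}{\delta_x}+(1-\theta)\log\frac{1-\theta}{1-\delta_x}$, with the conventions $0\log(0/q)=0$ for every $q\in[0,1]$, $c\log(c/0)=+\infty$ for $c>0$, and $0\cdot(+\infty)=0$. The risk is $R_\delta(\theta)=(1-\theta)L(\theta,\delta_0)+\theta L(\theta,\delta_1)\in[0,+\infty]$, equivalently $R_\delta(\theta)=-S(\theta)+\theta^2\log\frac1{\delta_1}+\theta(1-\theta)\log\frac1{1-\delta_1}+\theta(1-\theta)\log\frac1{\delta_0}+(1-\theta)^2\log\frac1{1-\delta_0}$,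 where $S(\theta)=-\theta\log\theta-(1-\theta)\log(1-\theta)$ is the binary entropy. A decision $\delta'$ dominates $\delta$ if $R_{\delta'}(\theta)\le R_\delta(\theta)$ for all $\theta\in[0,1]$ with strict inequality for some $\theta$. A decision is admissible if no decision in $\mathcal D$ dominates it. A class $\mathcal C\subseteq\mathcal D$ is complete if every $\delta\in\mathcal D\setminus\mathcal C$ is dominated by some element of $\mathcal C$; it is minimal complete if it is complete and no proper subset of it is complete. *)

theory Defs
  imports "HOL-Analysis.Analysis"
begin

definition xlogxy :: "real \<Rightarrow> real \<Rightarrow> ereal" where
  "xlogxy c q = (if c = 0 then 0 else if q = 0 then \<infinity> else ereal (c * ln (c / q)))"

definition KL_loss :: "real \<Rightarrow> real \<Rightarrow> ereal" where
  "KL_loss \<theta> q = xlogxy \<theta> q + xlogxy (1 - \<theta>) (1 - q)"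

text \<open>Decisions are pairs (delta0, delta1); the ereal product satisfies 0 * infinity = 0.\<close>
definition risk :: "real \<times> real \<Rightarrow> real \<Rightarrow> ereal" where
  "risk \<delta> \<theta> = ereal (1 - \<theta>) * KL_loss \<theta> (fst \<delta>) + ereal \<theta> * KL_loss \<theta> (snd \<delta>)"

definition decisions :: "(real \<times> real) set" where
  "decisions = {0..1} \<times> {0..1}"

definition dominates :: "real \<times> real \<Rightarrow> real \<times> real \<Rightarrow> bool" where
  "dominates \<delta>' \<delta> \<longleftrightarrow>
     (\<forall>\<theta>\<in>{0..1}. risk \<delta>' \<theta> \<le> risk \<delta> \<theta>) \<and> (\<exists>\<theta>\<in>{0..1}. risk \<delta>' \<theta> < risk \<delta> \<theta>)"

definition admissible :: "real \<times> real \<Rightarrow> bool" where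
  "admissible \<delta> \<longleftrightarrow> \<not> (\<exists>\<delta>'\<in>decisions. dominates \<delta>' \<delta>)"

definition complete_class :: "(real \<times> real) set \<Rightarrow> bool" where
  "complete_class C \<longleftrightarrow> C \<subseteq> decisions \<and>
     (\<forall>\<delta>\<in>decisions - C. \<exists>\<delta>'\<in>C. dominates \<delta>' \<delta>)"

definition minimal_complete_class :: "(real \<times> real) set \<Rightarrow> bool" where
  "minimal_complete_class C \<longleftrightarrow> complete_class C \<and> (\<forall>C'. C' \<subset> C \<longrightarrow> \<not> complete_class C')"

definition A_class :: "(real \<times> real) set" where
  "A_class = {(d0, d1). 0 < d0 \<and> d0 < d1 \<and> d1 < 1}
           \<union> {(d0, d1). 0 < d0 \<and> d0 = d1 \<and> d1 < 1}
           \<union> {(0, 1)}"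

end

theory Submission
  imports Defs
begin
lemma ln_lower: fixes x :: real assumes "1 \<le> x" shows "2*(x-1)/(x+1) \<le> ln x"
proof -
  let ?g = "\<lambda>x::real. ln x - 2*(x-1)/(x+1)"
  have "?g 1 \<le> ?g x"
  proof (rule DERIV_nonneg_imp_nondecreasing[OF assms])
    fix y :: real assume y: "1 \<le> y" "y \<le> x"
    have d: "DERIV ?g y :> (1/y - 4/(y+1)^2)"
      using y by (auto intro!: derivative_eq_intros simp: field_simps power2_eq_square)
    have yp: "y > 0" "y + 1 > 0" using y by auto
    have q: "(y+1)^2 > 0" using yp by simp
    have "4*y \<le> (y+1)^2" using sum_squares_ge_zero[of "y-1" 0] by (simp add: power2_eq_square algebra_simps)
    hence "4/(y+1)^2 \<le> 1/y" using yp q by (simp add: field_simps)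
    hence "1/y - 4/(y+1)^2 \<ge> 0" by simp
    with d show "\<exists>z. DERIV ?g y :> z \<and> z \<ge> 0" by blast
  qed
  thus ?thesis by simp
qed

lemma ln_ratio_lower: fixes x y :: real assumes "0 < y" "y \<le> x" shows "2*(x-y)/(x+y) \<le> ln x - ln y"
proof -
  have "2*(x/y-1)/(x/y+1) \<le> ln (x/y)" using assms by (intro ln_lower) simp
  moreover have "2*(x/y-1)/(x/y+1) = 2*(x-y)/(x+y)"
  proof -
    have "x + y > 0" using assms by simp
    have "x/y - 1 = (x-y)/y" "x/y+1 = (x+y)/y" using assms by (simp_all add: field_simps)
    thus ?thesis using assms \<open>x+y>0\<close> by simp
  qed
  moreover have "ln (x/y) = ln x - ln y" using assms by (simp add: ln_div)
  ultimately show ?thesis by simp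
qed

lemma key_ineq:
  fixes d0 d1 th :: real
  assumes "0 < d1" "d1 < d0" "d0 < 1" "0 \<le> th" "th \<le> 1"
  shows "ln (1 + (d0 - d1)) < th^2 * (ln d0 - ln d1) + (1-th)^2 * (ln (1-d1) - ln (1-d0))"
proof -
  define d where "d = d0 - d1"
  define p where "p = d0 + d1"
  have dpos: "d > 0" using assms by (simp add: d_def)
  have A: "2*d/p \<le> ln d0 - ln d1" using ln_ratio_lower[of d1 d0] assms by (simp add: d_def p_def)
  have B: "2*d/(2-p) \<le> ln (1-d1) - ln (1-d0)"
  proof -
    have "2*d/(2-p) = 2*((1-d1)-(1-d0))/((1-d1)+(1-d0))" by (simp add: d_def p_def algebra_simps)
    thus ?thesis using ln_ratio_lower[of "1-d0" "1-d1"] assms by simp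
  qed
  have pp: "0 < p" "p < 2" using assms by (auto simp: p_def)
  have "d \<le> th^2 * (2*d/p) + (1-th)^2 * (2*d/(2-p))"
  proof -
    have "th^2 * (2*d/p) + (1-th)^2 * (2*d/(2-p)) - d = d * (2*th - p)^2 / (p*(2-p))"
      using pp by (simp add: field_simps power2_eq_square)
    also have "\<dots> \<ge> 0" using pp dpos by simp
    finally show ?thesis by simp
  qed
  also have "\<dots> \<le> th^2 * (ln d0 - ln d1) + (1-th)^2 * (ln (1-d1) - ln (1-d0))"
    by (intro add_mono mult_left_mono A B) auto
  finally have "d \<le> \<dots>" .
  moreover have "ln (1 + d) < d" using dpos by (rule ln_add_one_self_less_self)
  ultimately show ?thesis by (simp add: d_def)
qed

lemma gibbs:
  fixes a b p q :: real
  assumes "0 < a" "0 < b" "0 < p" "p < 1" "0 < q" "q < 1" "a*(1-p) = b*p"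
  shows "a * ln q + b * ln (1-q) \<le> a * ln p + b * ln (1-p)"
    and "a * ln q + b * ln (1-q) = a * ln p + b * ln (1-p) \<Longrightarrow> q = p"
proof -
  have e1: "ln (q/p) \<le> q/p - 1" using assms by (intro ln_le_minus_one) simp
  have e2: "ln ((1-q)/(1-p)) \<le> (1-q)/(1-p) - 1" using assms by (intro ln_le_minus_one) simp
  have lq: "ln (q/p) = ln q - ln p" "ln ((1-q)/(1-p)) = ln (1-q) - ln (1-p)" using assms by (simp_all add: ln_div)
  have zero: "a*(q/p - 1) + b*((1-q)/(1-p) - 1) = 0"
  proof -
    have r: "a/p = b/(1-p)" using assms by (simp add: field_simps)
    have "a*(q/p - 1) = (q-p)*(a/p)" using assms by (simp add: field_simps)
    moreover have "b*((1-q)/(1-p) - 1) = -((q-p)*(b/(1-p)))" using assms by (simp add: field_simps)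
    ultimately have "a*(q/p - 1) + b*((1-q)/(1-p) - 1) = (q-p)*(a/p - b/(1-p))"
      by (simp add: algebra_simps)
    thus ?thesis using r by simp
  qed
  have "a * ln (q/p) + b * ln ((1-q)/(1-p)) \<le> a*(q/p - 1) + b*((1-q)/(1-p) - 1)"
    using e1 e2 assms by (intro add_mono mult_left_mono) auto
  thus "a * ln q + b * ln (1-q) \<le> a * ln p + b * ln (1-p)" using zero lq by (simp add: algebra_simps)
  assume eq: "a * ln q + b * ln (1-q) = a * ln p + b * ln (1-p)"
  show "q = p"
  proof (rule ccontr)
    assume "q \<noteq> p"
    hence "q/p \<noteq> 1" using assms by simp
    hence s1: "ln (q/p) < q/p - 1" using e1 ln_eq_minus_one[of "q/p"] assms by force
    have "a * ln (q/p) + b * ln ((1-q)/(1-p)) < a*(q/p - 1) + b*((1-q)/(1-p) - 1)"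
      using s1 e2 assms by (intro add_less_le_mono mult_strict_left_mono mult_left_mono) auto
    thus False using zero lq eq by (simp add: algebra_simps)
  qed
qed


definition Kr :: "real \<Rightarrow> real \<Rightarrow> real" where
  "Kr th q = th*(ln th - ln q) + (1-th)*(ln (1-th) - ln (1-q))"
definition Er :: "real \<times> real \<Rightarrow> real \<Rightarrow> real" where
  "Er d th = (1-th)*Kr th (fst d) + th*Kr th (snd d)"

lemma xlogxy_fin: "0 \<le> c \<Longrightarrow> 0 < q \<Longrightarrow> xlogxy c q = ereal (c*(ln c - ln q))"
  unfolding xlogxy_def by (cases "c=0") (auto simp: ln_div)

lemma KL_fin: "0\<le>th \<Longrightarrow> th\<le>1 \<Longrightarrow> 0<q \<Longrightarrow> q<1 \<Longrightarrow> KL_loss th q = ereal (Kr th q)"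
  by (simp add: KL_loss_def Kr_def xlogxy_fin)

lemma risk_fin: "0<fst d \<Longrightarrow> fst d<1 \<Longrightarrow> 0<snd d \<Longrightarrow> snd d<1 \<Longrightarrow> 0\<le>th \<Longrightarrow> th\<le>1
   \<Longrightarrow> risk d th = ereal (Er d th)"
  by (simp add: risk_def KL_fin Er_def)

lemma KL_nm: "KL_loss th q \<noteq> -\<infinity>"
  by (simp add: KL_loss_def xlogxy_def)

lemma KL_inf: "0<th \<Longrightarrow> th<1 \<Longrightarrow> q=0 \<or> q=1 \<Longrightarrow> KL_loss th q = \<infinity>"
  by (auto simp: KL_loss_def xlogxy_def)

lemma risk_inf:
  assumes "0<th" "th<1" "fst d \<in> {0,1} \<or> snd d \<in> {0,1}"
  shows "risk d th = \<infinity>"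
proof -
  have a: "ereal (1-th) * KL_loss th (fst d) \<noteq> -\<infinity>"
    using KL_nm[of th "fst d"] assms by (cases "KL_loss th (fst d)") auto
  have b: "ereal th * KL_loss th (snd d) \<noteq> -\<infinity>"
    using KL_nm[of th "snd d"] assms by (cases "KL_loss th (snd d)") auto
  show ?thesis
  proof (cases "fst d \<in> {0,1}")
    case True
    hence "ereal (1-th) * KL_loss th (fst d) = \<infinity>" using KL_inf assms by auto
    thus ?thesis using b by (simp add: risk_def)
  next
    case False
    hence "ereal th * KL_loss th (snd d) = \<infinity>" using KL_inf assms by auto
    thus ?thesis using a by (simp add: risk_def)
  qed
qed

lemma risk0: "risk d 0 = KL_loss 0 (fst d)"
  by (simp add: risk_def zero_ereal_def[symmetric])

lemma risk1: "risk d 1 = KL_loss 1 (snd d)"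
  by (simp add: risk_def zero_ereal_def[symmetric])

lemma KL0: "KL_loss 0 q = (if q = 1 then \<infinity> else ereal (ln (1/(1-q))))"
  by (simp add: KL_loss_def xlogxy_def)

lemma KL1: "KL_loss 1 q = (if q = 0 then \<infinity> else ereal (ln (1/q)))"
  by (simp add: KL_loss_def xlogxy_def)

lemma KL0_nonneg: "0 \<le> q \<Longrightarrow> q \<le> 1 \<Longrightarrow> 0 \<le> KL_loss 0 q"
  by (simp add: KL0)

lemma KL1_nonneg: "0 \<le> q \<Longrightarrow> q \<le> 1 \<Longrightarrow> 0 \<le> KL_loss 1 q"
  by (simp add: KL1)

lemma KL0_pos: "0 < q \<Longrightarrow> q \<le> 1 \<Longrightarrow> 0 < KL_loss 0 q"
  by (auto simp: KL0 intro!: ln_gt_zero)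

lemma KL1_pos: "0 \<le> q \<Longrightarrow> q < 1 \<Longrightarrow> 0 < KL_loss 1 q"
  by (auto simp: KL1 intro!: ln_gt_zero)

lemma Er1: "Er d 1 = - ln (snd d)"
  by (simp add: Er_def Kr_def)

lemma dom_boundary:
  assumes "d \<in> decisions" "d \<noteq> (0,1)" "fst d \<in> {0,1} \<or> snd d \<in> {0,1}"
  shows "dominates (0,1) d"
proof -
  obtain d0 d1 where dd: "d = (d0,d1)" by (cases d)
  have r: "0 \<le> d0" "d0 \<le> 1" "0 \<le> d1" "d1 \<le> 1" using assms(1) by (auto simp: decisions_def dd)
  have le: "risk (0,1) th \<le> risk d th" if "th \<in> {0..1}" for th
  proof -
    have "th = 0 \<or> th = 1 \<or> (0 < th \<and> th < 1)" using that by auto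
    then consider "th = 0" | "th = 1" | "0 < th \<and> th < 1" by blast
    thus ?thesis
    proof cases
      case 1 thus ?thesis using r by (simp add: risk0 dd KL0_nonneg) (simp add: KL0)
    next
      case 2 thus ?thesis using r by (simp add: risk1 dd KL1_nonneg) (simp add: KL1)
    next
      case 3 thus ?thesis using risk_inf[of th d] assms(3) by simp
    qed
  qed
  have "\<exists>th\<in>{0..1}. risk (0,1) th < risk d th"
  proof (cases "d0 = 0")
    case True
    hence "d1 \<noteq> 1" using assms(2) dd by auto
    hence "risk (0,1) 1 < risk d 1" using r by (simp add: risk1 dd KL1_pos) (simp add: KL1 KL1_pos)
    thus ?thesis by force
  next
    case False
    hence "risk (0,1) 0 < risk d 0" using r by (simp add: risk0 dd KL0_pos) (simp add: KL0 KL0_pos)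
    thus ?thesis by force
  qed
  thus ?thesis using le by (simp add: dominates_def)
qed

lemma dom_interior:
  assumes "0 < d1" "d1 < d0" "d0 < 1"
  defines "t \<equiv> d0 / (1 + (d0 - d1))"
  shows "dominates (t,t) (d0,d1)" and "0 < t" "t < 1"
proof -
  define s where "s = 1 + (d0 - d1)"
  have sp: "s > 1" using assms by (simp add: s_def)
  show tp: "0 < t" using assms by (simp add: t_def)
  have tdef: "t = d0/s" by (simp add: t_def s_def)
  have "1 - t = (s - d0)/s" using sp by (simp add: tdef field_simps)
  moreover have "s - d0 = 1 - d1" by (simp add: s_def)
  ultimately have omt: "1 - t = (1 - d1)/s" by simp
  show t1: "t < 1" using omt assms sp by simp
  have lt: "ln t = ln d0 - ln s" using assms(1-3) sp by (simp add: tdef ln_div)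
  have lt1: "ln (1-t) = ln (1-d1) - ln s" using assms(1-3) sp by (simp add: omt ln_div)
  have main: "Er (t,t) th < Er (d0,d1) th" if "0 \<le> th" "th \<le> 1" for th
  proof -
    have "Er (d0,d1) th - Er (t,t) th
        = th^2 * (ln d0 - ln d1) + (1-th)^2 * (ln (1-d1) - ln (1-d0)) - ln s"
      unfolding Er_def Kr_def fst_conv snd_conv lt lt1
      by (simp add: algebra_simps power2_eq_square)
    moreover have "ln s < th^2 * (ln d0 - ln d1) + (1-th)^2 * (ln (1-d1) - ln (1-d0))"
      using key_ineq[of d1 d0 th] assms that by (simp add: s_def)
    ultimately show ?thesis by simp
  qed
  have rr: "risk (t,t) th < risk (d0,d1) th" if "th \<in> {0..1}" for th
    using that main[of th] risk_fin[of "(t,t)" th] risk_fin[of "(d0,d1)" th] assms tp t1 by auto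
  show "dominates (t,t) (d0,d1)"
    unfolding dominates_def using rr by (auto intro: less_imp_le)
qed

lemma adm_interior:
  assumes "0 < c" "c \<le> d1" "d1 < 1"
  shows "admissible (c,d1)"
  unfolding admissible_def
proof
  assume "\<exists>d'\<in>decisions. dominates d' (c,d1)"
  then obtain d' where d'dec: "d' \<in> decisions" and dom: "dominates d' (c,d1)" by blast
  obtain x y where dd: "d' = (x,y)" by (cases d')
  have le: "\<forall>th\<in>{0..1}. risk d' th \<le> risk (c,d1) th" using dom by (simp add: dominates_def)
  have c1: "c < 1" using assms by simp
  have fin: "risk (c,d1) c = ereal (Er (c,d1) c)" by (rule risk_fin) (use assms c1 in auto)
  have fin1: "risk (c,d1) 1 = ereal (Er (c,d1) 1)" by (rule risk_fin) (use assms c1 in auto)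
  have "risk d' c \<noteq> \<infinity>" using le[rule_format, of c] fin assms c1 by auto
  hence int: "x \<notin> {0,1} \<and> y \<notin> {0,1}" using risk_inf[of c d'] assms c1 dd by auto
  have xr: "0<x" "x<1" "0<y" "y<1" using int d'dec dd by (auto simp: decisions_def)
  have e1: "Er (x,y) c \<le> Er (c,d1) c"
    using le[rule_format, of c] fin risk_fin[of "(x,y)" c] xr assms c1 dd by auto
  have e2: "Er (x,y) 1 \<le> Er (c,d1) 1"
    using le[rule_format, of 1] fin1 risk_fin[of "(x,y)" 1] xr assms c1 dd by auto
  define \<beta> where "\<beta> = c*(d1-c)/(1-d1)"
  have bnn: "\<beta> \<ge> 0" using assms by (simp add: \<beta>_def)
  define G where "G = (\<lambda>x y. (1-c)*(c*ln x + (1-c)*ln(1-x)) + ((c^2+\<beta>)*ln y + c*(1-c)*ln(1-y)))"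
  have iden: "Er (u,v) c + \<beta> * Er (u,v) 1 = (c*ln c + (1-c)*ln(1-c)) - G u v" for u v
    by (simp add: Er_def Kr_def G_def algebra_simps power2_eq_square)
  have "Er (x,y) c + \<beta> * Er (x,y) 1 \<le> Er (c,d1) c + \<beta> * Er (c,d1) 1"
    using e1 e2 bnn by (intro add_mono mult_left_mono) auto
  hence GG: "G c d1 \<le> G x y" using iden[of x y] iden[of c d1] by simp
  have g1: "c*ln x + (1-c)*ln(1-x) \<le> c*ln c + (1-c)*ln(1-c)"
   and g1e: "c*ln x + (1-c)*ln(1-x) = c*ln c + (1-c)*ln(1-c) \<Longrightarrow> x = c"
    using gibbs[of c "1-c" c x] assms c1 xr by auto
  have cond: "(c^2+\<beta>)*(1-d1) = c*(1-c)*d1"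
    using assms by (simp add: \<beta>_def field_simps power2_eq_square)
  have pos2: "0 < c^2+\<beta>" using bnn assms by (simp add: add_pos_nonneg)
  have pos3: "0 < c*(1-c)" using assms c1 by simp
  have g2: "(c^2+\<beta>)*ln y + c*(1-c)*ln(1-y) \<le> (c^2+\<beta>)*ln d1 + c*(1-c)*ln(1-d1)"
   and g2e: "(c^2+\<beta>)*ln y + c*(1-c)*ln(1-y) = (c^2+\<beta>)*ln d1 + c*(1-c)*ln(1-d1) \<Longrightarrow> y = d1"
    using gibbs[of "c^2+\<beta>" "c*(1-c)" d1 y] pos2 pos3 cond assms c1 xr by auto
  have m: "(1-c)*(c*ln x + (1-c)*ln(1-x)) \<le> (1-c)*(c*ln c + (1-c)*ln(1-c))"
    using g1 c1 by (intro mult_left_mono) auto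
  have eq1: "(1-c)*(c*ln x + (1-c)*ln(1-x)) = (1-c)*(c*ln c + (1-c)*ln(1-c))"
   and eq2: "(c^2+\<beta>)*ln y + c*(1-c)*ln(1-y) = (c^2+\<beta>)*ln d1 + c*(1-c)*ln(1-d1)"
    using GG m g2 unfolding G_def by linarith+
  have "x = c" using eq1 c1 g1e by simp
  moreover have "y = d1" using eq2 g2e by simp
  ultimately have "d' = (c,d1)" using dd by simp
  thus False using dom by (simp add: dominates_def)
qed

lemma adm_01: "admissible (0,1)"
  unfolding admissible_def
proof
  assume "\<exists>d'\<in>decisions. dominates d' (0,1)"
  then obtain d' where d'dec: "d' \<in> decisions" and dom: "dominates d' (0,1)" by blast
  obtain x y where dd: "d' = (x,y)" by (cases d')
  have r: "0 \<le> x" "x \<le> 1" "0 \<le> y" "y \<le> 1" using d'dec dd by (auto simp: decisions_def)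
  have le: "\<forall>th\<in>{0..1}. risk d' th \<le> risk (0,1) th" using dom by (simp add: dominates_def)
  have z0: "risk (0,1) 0 = 0" by (simp add: risk0 KL0)
  have z1: "risk (0,1) 1 = 0" by (simp add: risk1 KL1)
  have "x = 0"
  proof (rule ccontr)
    assume "x \<noteq> 0"
    hence "0 < risk d' 0" using r dd by (simp add: risk0 KL0_pos)
    thus False using le[rule_format, of 0] z0 by simp
  qed
  moreover have "y = 1"
  proof (rule ccontr)
    assume "y \<noteq> 1"
    hence "0 < risk d' 1" using r dd by (simp add: risk1 KL1_pos)
    thus False using le[rule_format, of 1] z1 by simp
  qed
  ultimately show False using dom dd by (simp add: dominates_def)
qed

lemma A_sub: "A_class \<subseteq> decisions"
  by (auto simp: A_class_def decisions_def)

lemma adm_A: "d \<in> A_class \<Longrightarrow> admissible d"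
  unfolding A_class_def using adm_01 adm_interior by (auto simp: less_imp_le)

lemma compl_A:
  assumes "d \<in> decisions - A_class" shows "\<exists>d'\<in>A_class. dominates d' d"
proof -
  obtain d0 d1 where dd: "d = (d0,d1)" by (cases d)
  have r: "0 \<le> d0" "d0 \<le> 1" "0 \<le> d1" "d1 \<le> 1" using assms dd by (auto simp: decisions_def)
  have nA: "d \<notin> A_class" using assms by simp
  have inA: "(0,1) \<in> A_class" by (simp add: A_class_def)
  show ?thesis
  proof (cases "d0 \<in> {0,1} \<or> d1 \<in> {0,1}")
    case True
    have "d \<noteq> (0,1)" using nA inA by auto
    hence "dominates (0,1) d" using dom_boundary[of d] assms True dd by auto
    thus ?thesis using inA by blast
  next
    case False
    hence i: "0 < d0" "d0 < 1" "0 < d1" "d1 < 1" using r by auto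
    have "d1 < d0" using nA i dd by (auto simp: A_class_def)
    from dom_interior[OF i(3) this i(2)] show ?thesis using dd
      by (auto simp: A_class_def)
  qed
qed

theorem theorem1:
  shows "minimal_complete_class A_class
         \<and> (\<forall>C. minimal_complete_class C \<longrightarrow> C = A_class)
         \<and> A_class = {\<delta>\<in>decisions. admissible \<delta>}"
proof -
  have cA: "complete_class A_class" using A_sub compl_A by (simp add: complete_class_def)
  have sup: "A_class \<subseteq> C" if cC: "complete_class C" for C
  proof
    fix d assume dA: "d \<in> A_class"
    show "d \<in> C"
    proof (rule ccontr)
      assume "d \<notin> C"
      hence "d \<in> decisions - C" using dA A_sub by auto
      then obtain d' where "d' \<in> C" "dominates d' d" using cC unfolding complete_class_def by blast
      moreover have "C \<subseteq> decisions" using cC by (simp add: complete_class_def)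
      ultimately show False using adm_A[OF dA] by (auto simp: admissible_def)
    qed
  qed
  have m: "minimal_complete_class A_class"
    unfolding minimal_complete_class_def using cA sup by blast
  have u: "\<forall>C. minimal_complete_class C \<longrightarrow> C = A_class"
  proof (intro allI impI)
    fix C assume mc: "minimal_complete_class C"
    hence "A_class \<subseteq> C" using sup by (simp add: minimal_complete_class_def)
    thus "C = A_class" using mc cA by (auto simp: minimal_complete_class_def)
  qed
  have e: "A_class = {\<delta>\<in>decisions. admissible \<delta>}"
  proof
    show "A_class \<subseteq> {\<delta>\<in>decisions. admissible \<delta>}" using A_sub adm_A by auto
    show "{\<delta>\<in>decisions. admissible \<delta>} \<subseteq> A_class"
    proof
      fix d assume "d \<in> {\<delta>\<in>decisions. admissible \<delta>}"
      thus "d \<in> A_class" using compl_A[of d] A_sub by (auto simp: admissible_def)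
    qed
  qed
  show ?thesis using m u e by blast
qed

end
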